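(* Let $B$ be a unital commutative semi-simple Banach algebra with connected maximal ideal space $X$, and let $T$ be a unital endomorphism of $B$ which is a Riesz operator. Then $\{f\in B: Tf=f\}$ is one dimensional; that is, the eigenvalue $1$ of $T$ has multiplicity $1$, and $Tf=f$ implies that $f$ is a constant multiple of $1$.
   Context: A unital endomorphism of $B$ is a linear multiplicative map $T:B\to B$ with $T1=1$. A bounded operator $T$ is a Riesz operator if $\lim_{n}\left[\inf\{\|T^n-K\|:K \text{ compact}\}\right]^{1/n}=0$. The maximal ideal space carries the Gelfand topology. *)

theory Defs
  imports "HOL-Analysis.Analysis"
begin

text \<open>A complex Banach algebra structure on a real Banach algebra: an explicit complex
  scalar multiplication sc extending the real one, with the complex normed-space
  and algebra axioms.\<close>
definition complex_scaling :: "(complex \<Rightarrow> 'a::{real_normed_algebra,comm_ring_1} \<Rightarrow> 'a) \<Rightarrow> bool" where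
  "complex_scaling sc \<longleftrightarrow>
     (\<forall>r x. sc (complex_of_real r) x = scaleR r x) \<and>
     (\<forall>a b x. sc (a + b) x = sc a x + sc b x) \<and>
     (\<forall>a x y. sc a (x + y) = sc a x + sc a y) \<and>
     (\<forall>a b x. sc (a * b) x = sc a (sc b x)) \<and>
     (\<forall>a x. norm (sc a x) = cmod a * norm x) \<and>
     (\<forall>a x y. sc a (x * y) = sc a x * y)"

definition clinear_map :: "(complex \<Rightarrow> 'a \<Rightarrow> 'a) \<Rightarrow> ('a::real_normed_vector \<Rightarrow> 'a) \<Rightarrow> bool" where
  "clinear_map sc T \<longleftrightarrow> (\<forall>x y. T (x + y) = T x + T y) \<and> (\<forall>c x. T (sc c x) = sc c (T x))"

definition bounded_op :: "(complex \<Rightarrow> 'a \<Rightarrow> 'a) \<Rightarrow> ('a::real_normed_vector \<Rightarrow> 'a) \<Rightarrow> bool" where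
  "bounded_op sc T \<longleftrightarrow> clinear_map sc T \<and> (\<exists>M. \<forall>x. norm (T x) \<le> norm x * M)"

definition compact_op :: "(complex \<Rightarrow> 'a \<Rightarrow> 'a) \<Rightarrow> ('a::real_normed_vector \<Rightarrow> 'a) \<Rightarrow> bool" where
  "compact_op sc K \<longleftrightarrow> bounded_op sc K \<and> compact (closure (K ` ball 0 1))"

definition riesz_op :: "(complex \<Rightarrow> 'a \<Rightarrow> 'a) \<Rightarrow> ('a::real_normed_vector \<Rightarrow> 'a) \<Rightarrow> bool" where
  "riesz_op sc T \<longleftrightarrow> bounded_op sc T \<and>
     (\<lambda>n. (Inf {onorm (\<lambda>x. (T ^^ n) x - K x) | K. compact_op sc K}) powr (1 / real n))
       \<longlonglongrightarrow> 0"

definition unital_endomorphism :: "(complex \<Rightarrow> 'a \<Rightarrow> 'a) \<Rightarrow> ('a::{real_normed_algebra,comm_ring_1} \<Rightarrow> 'a) \<Rightarrow> bool" where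
  "unital_endomorphism sc T \<longleftrightarrow> clinear_map sc T \<and> (\<forall>x y. T (x * y) = T x * T y) \<and> T 1 = 1"

definition ring_ideal :: "'a::comm_ring_1 set \<Rightarrow> bool" where
  "ring_ideal I \<longleftrightarrow> 0 \<in> I \<and> (\<forall>x\<in>I. \<forall>y\<in>I. x + y \<in> I) \<and> (\<forall>x\<in>I. - x \<in> I) \<and>
     (\<forall>x\<in>I. \<forall>y. y * x \<in> I)"

definition maximal_ideal :: "'a::comm_ring_1 set \<Rightarrow> bool" where
  "maximal_ideal I \<longleftrightarrow> ring_ideal I \<and> I \<noteq> UNIV \<and>
     (\<forall>J. ring_ideal J \<and> I \<subseteq> J \<longrightarrow> J = I \<or> J = UNIV)"

definition semisimple :: "'a::comm_ring_1 itself \<Rightarrow> bool" where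
  "semisimple _ \<longleftrightarrow> \<Inter> {I :: 'a set. maximal_ideal I} = {0}"

text \<open>Maximal ideal space: nonzero multiplicative complex-linear functionals (characters);
  its Gelfand topology is the topology of pointwise convergence, i.e. the subspace
  topology of the product topology on 'a => complex.\<close>
definition characters :: "(complex \<Rightarrow> 'a \<Rightarrow> 'a) \<Rightarrow> ('a::{real_normed_algebra,comm_ring_1} \<Rightarrow> complex) set" where
  "characters sc = {\<phi>. (\<forall>x y. \<phi> (x + y) = \<phi> x + \<phi> y) \<and> (\<forall>c x. \<phi> (sc c x) = c * \<phi> x) \<and>
       (\<forall>x y. \<phi> (x * y) = \<phi> x * \<phi> y) \<and> \<phi> \<noteq> (\<lambda>_. 0)}"

end

theory Submission
  imports Defs
begin

lemma norm_one_ge: "1 \<le> norm (1::'a::{real_normed_algebra,comm_ring_1})"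
proof -
  have "norm (1::'a) = norm ((1::'a)*1)" by simp
  also have "\<dots> \<le> norm (1::'a) * norm (1::'a)" by (rule norm_mult_ineq)
  finally have "norm (1::'a) * 1 \<le> norm (1::'a) * norm (1::'a)" by simp
  moreover have "norm (1::'a) > 0" by simp
  ultimately show ?thesis by simp
qed

lemma norm_power_le: "norm ((y::'a::{real_normed_algebra,comm_ring_1}) ^ Suc n) \<le> norm y ^ Suc n"
proof (induction n)
  case 0 then show ?case by simp
next
  case (Suc n)
  have "norm (y ^ Suc (Suc n)) = norm (y * y ^ Suc n)" by simp
  also have "\<dots> \<le> norm y * norm (y ^ Suc n)" by (rule norm_mult_ineq)
  also have "\<dots> \<le> norm y * norm y ^ Suc n" by (rule mult_left_mono[OF Suc]) simp
  finally show ?case by simp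
qed

lemma neumann:
  fixes y :: "'a::{real_normed_algebra,comm_ring_1,banach}"
  assumes "norm y \<le> 1/2"
  shows "\<exists>w. (1 - y) * w = 1 \<and> norm w \<le> 2 * (norm (1::'a) + 1)"
proof -
  define g where "g n = (norm (1::'a) + 1) * (1/2::real)^n" for n
  have bnd: "norm (y^n) \<le> g n" for n
  proof (cases n)
    case 0 then show ?thesis by (simp add: g_def)
  next
    case (Suc m)
    have "norm (y^n) \<le> norm y ^ n" using norm_power_le[of y m] Suc by simp
    also have "\<dots> \<le> (1/2)^n" by (rule power_mono) (use assms in auto)
    also have "\<dots> \<le> g n" unfolding g_def
    proof -
      have "(1/2::real)^n = 1 * (1/2)^n" by simp
      also have "\<dots> \<le> (norm (1::'a) + 1) * (1/2)^n" by (rule mult_right_mono) auto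
      finally show "(1/2::real)^n \<le> (norm (1::'a) + 1) * (1/2)^n" .
    qed
    finally show ?thesis .
  qed
  have sg: "summable g" unfolding g_def by (intro summable_mult summable_geometric) simp
  have sn: "summable (\<lambda>n. norm (y^n))"
    by (rule summable_comparison_test[OF _ sg]) (use bnd in auto)
  have s: "summable (\<lambda>n. y^n)" by (rule summable_norm_cancel[OF sn])
  define w where "w = (\<Sum>n. y^n)"
  have "norm w \<le> (\<Sum>n. norm (y^n))" using summable_norm[OF sn] w_def by simp
  also have "\<dots> \<le> (\<Sum>n. g n)" by (rule suminf_le[OF bnd sn sg])
  also have "(\<Sum>n. g n) = 2 * (norm (1::'a) + 1)"
    unfolding g_def using suminf_mult[OF summable_geometric[of "1/2::real"]] suminf_geometric[of "1/2::real"]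
    by simp
  finally have nw: "norm w \<le> 2 * (norm (1::'a) + 1)" .
  have lim0: "(\<lambda>n. y^n) \<longlonglongrightarrow> 0" using summable_LIMSEQ_zero[OF s] .
  have "(\<lambda>n. y^n - y^(Suc n)) sums (y^0 - 0)" using telescope_sums'[OF lim0] .
  moreover have "(\<lambda>n. y^n - y^Suc n) = (\<lambda>n. (1 - y) * y^n)" by (simp add: algebra_simps)
  moreover have "(\<lambda>n. (1-y) * y^n) sums ((1-y) * w)" using sums_mult[OF summable_sums[OF s]] w_def by simp
  ultimately have "(1 - y) * w = 1" using sums_unique2 by fastforce
  with nw show ?thesis by blast
qed

locale cba =
  fixes sc :: "complex \<Rightarrow> 'a::{real_normed_algebra,comm_ring_1,banach} \<Rightarrow> 'a"
  assumes cs: "complex_scaling sc"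
begin

definition emb :: "complex \<Rightarrow> 'a" where "emb c = sc c 1"

lemma sc_real: "sc (complex_of_real r) x = r *\<^sub>R x" using cs unfolding complex_scaling_def by blast
lemma sc_addl: "sc (a + b) x = sc a x + sc b x" using cs unfolding complex_scaling_def by blast
lemma sc_addr: "sc a (x + y) = sc a x + sc a y" using cs unfolding complex_scaling_def by blast
lemma sc_assoc: "sc (a * b) x = sc a (sc b x)" using cs unfolding complex_scaling_def by blast
lemma sc_norm: "norm (sc a x) = cmod a * norm x" using cs unfolding complex_scaling_def by blast
lemma sc_multl: "sc a (x * y) = sc a x * y" using cs unfolding complex_scaling_def by blast

lemma sc_emb: "sc a x = emb a * x"
  using sc_multl[of a 1 x] by (simp add: emb_def)
lemma emb_add: "emb (a + b) = emb a + emb b" by (simp add: emb_def sc_addl)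
lemma emb_mult: "emb (a * b) = emb a * emb b"
  unfolding emb_def sc_assoc by (subst sc_emb) (simp add: emb_def)
lemma emb_one[simp]: "emb 1 = 1" using sc_real[of 1 1] by (simp add: emb_def)
lemma emb_zero[simp]: "emb 0 = 0" using sc_real[of 0 1] by (simp add: emb_def)
lemma emb_uminus: "emb (- a) = - emb a"
  using emb_add[of a "-a"] by (metis add.right_inverse emb_zero neg_eq_iff_add_eq_0)
lemma emb_diff: "emb (a - b) = emb a - emb b"
  using emb_add[of a "-b"] emb_uminus[of b] by simp
lemma emb_power: "emb (a ^ n) = emb a ^ n"
  by (induction n) (simp_all add: emb_mult)
lemma emb_sum: "emb (sum f A) = (\<Sum>i\<in>A. emb (f i))"
  by (induction A rule: infinite_finite_induct) (simp_all add: emb_add)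
lemma norm_emb_mult: "norm (emb c * x) = cmod c * norm x"
  using sc_norm[of c x] by (simp add: sc_emb)
lemma norm_emb: "norm (emb c) = cmod c * norm (1::'a)"
  using norm_emb_mult[of c 1] by simp
lemma emb_real: "emb (complex_of_real r) = r *\<^sub>R 1" by (simp add: emb_def sc_real)
lemma scaleR_emb: "r *\<^sub>R x = emb (complex_of_real r) * x"
  using sc_real[of r x] by (simp add: sc_emb)
lemma emb_inj: "emb a = emb b \<Longrightarrow> a = b"
proof -
  assume "emb a = emb b"
  then have "norm (emb (a - b)) = 0" by (simp add: emb_diff)
  then show "a = b" by (simp add: norm_emb)
qed

end

locale mid = cba sc for sc :: "complex \<Rightarrow> 'a::{real_normed_algebra,comm_ring_1,banach} \<Rightarrow> 'a" +
  fixes M :: "'a set"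
  assumes maxM: "maximal_ideal M"
begin

lemma idM: "ring_ideal M" using maxM unfolding maximal_ideal_def by blast
lemma M0[simp]: "0 \<in> M" using idM unfolding ring_ideal_def by blast
lemma Madd: "x \<in> M \<Longrightarrow> y \<in> M \<Longrightarrow> x + y \<in> M" using idM unfolding ring_ideal_def by blast
lemma Mneg: "x \<in> M \<Longrightarrow> - x \<in> M" using idM unfolding ring_ideal_def by blast
lemma Mmult: "x \<in> M \<Longrightarrow> y * x \<in> M" using idM unfolding ring_ideal_def by blast
lemma Mmult2: "x \<in> M \<Longrightarrow> x * y \<in> M" using Mmult[of x y] by (simp add: mult.commute)
lemma Mdiff: "x \<in> M \<Longrightarrow> y \<in> M \<Longrightarrow> x - y \<in> M" using Madd[of x "-y"] Mneg[of y] by simp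
lemma Msum: "(\<And>i. i \<in> A \<Longrightarrow> f i \<in> M) \<Longrightarrow> (\<Sum>i\<in>A. f i) \<in> M"
  by (induction A rule: infinite_finite_induct) (auto intro: Madd)
lemma one_notin: "1 \<notin> M"
proof
  assume "1 \<in> M"
  then have "M = UNIV" using Mmult[of 1] by auto
  then show False using maxM unfolding maximal_ideal_def by blast
qed
definition q :: "'a \<Rightarrow> real" where "q y = Inf ((\<lambda>m. norm (y - m)) ` M)"

lemma q_le: "m \<in> M \<Longrightarrow> q y \<le> norm (y - m)"
proof -
  assume m: "m \<in> M"
  have 1: "norm (y - m) \<in> (\<lambda>m. norm (y - m)) ` M" using m by blast
  have 2: "bdd_below ((\<lambda>m. norm (y - m)) ` M)" by (rule bdd_belowI[of _ 0]) force
  show ?thesis unfolding q_def by (rule cInf_lower[OF 1 2])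
qed
lemma q_nonneg: "0 \<le> q y"
  unfolding q_def by (rule cInf_greatest) (use M0 in blast, force)
lemma q_approx: "0 < e \<Longrightarrow> \<exists>m\<in>M. norm (y - m) < q y + e"
proof -
  assume "0 < e"
  then have 1: "Inf ((\<lambda>m. norm (y - m)) ` M) < q y + e" by (simp add: q_def)
  have 2: "(\<lambda>m. norm (y - m)) ` M \<noteq> {}" using M0 by blast
  from cInf_lessD[OF 2 1] show ?thesis by blast
qed
lemma q_greatest: "(\<And>m. m \<in> M \<Longrightarrow> c \<le> norm (y - m)) \<Longrightarrow> c \<le> q y"
  unfolding q_def by (rule cInf_greatest) (use M0 in blast, blast)
lemma q_le_norm: "q y \<le> norm y" using q_le[OF M0, of y] by (simp only: diff_zero)
lemma q_zero[simp]: "q 0 = 0" using q_le_norm[of 0] q_nonneg[of 0] by simp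
lemma q_cong: "y - z \<in> M \<Longrightarrow> q y \<le> q z"
proof (rule q_greatest)
  fix m assume "y - z \<in> M" "m \<in> M"
  then have "m + (y - z) \<in> M" by (rule Madd[rotated])
  from q_le[OF this, of y] show "q y \<le> norm (z - m)" by (simp add: algebra_simps)
qed
lemma q_cong_eq: "y - z \<in> M \<Longrightarrow> q y = q z"
  using q_cong[of y z] q_cong[of z y] Mneg[of "y - z"] by fastforce
lemma q_inM: "m \<in> M \<Longrightarrow> q m = 0" using q_cong_eq[of m 0] by simp
lemma q_neg: "q (- y) = q y"
proof -
  have "q (- y) \<le> q y" for y
  proof (rule q_greatest)
    fix m assume "m \<in> M"
    have "- y - (- m) = - (y - m)" by simp
    then have "norm (- y - (- m)) = norm (y - m)" by (simp only: norm_minus_cancel)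
    with q_le[OF Mneg[OF \<open>m \<in> M\<close>], of "-y"] show "q (- y) \<le> norm (y - m)" by simp
  qed
  from this[of y] this[of "-y"] show ?thesis by simp
qed
lemma q_add: "q (a + b) \<le> q a + q b"
proof (rule field_le_epsilon)
  fix e :: real assume e: "0 < e"
  obtain m1 where m1: "m1 \<in> M" "norm (a - m1) < q a + e/2" using q_approx[of "e/2" a] e by auto
  obtain m2 where m2: "m2 \<in> M" "norm (b - m2) < q b + e/2" using q_approx[of "e/2" b] e by auto
  have "q (a + b) \<le> norm (a + b - (m1 + m2))" by (rule q_le) (use m1 m2 Madd in auto)
  also have "\<dots> = norm ((a - m1) + (b - m2))" by (simp add: algebra_simps)
  also have "\<dots> \<le> norm (a - m1) + norm (b - m2)" by (rule norm_triangle_ineq)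
  finally show "q (a + b) \<le> q a + q b + e" using m1 m2 by simp
qed
lemma q_diff: "q (a - b) \<le> q a + q b" using q_add[of a "-b"] q_neg[of b] by simp
lemma q_abs_diff: "\<bar>q a - q b\<bar> \<le> q (a - b)"
  using q_add[of "a - b" b] q_add[of "b - a" a] q_neg[of "a - b"] by (simp add: abs_le_iff algebra_simps)
lemma q_mult: "q (a * b) \<le> q a * q b"
proof (rule field_le_epsilon)
  fix e :: real assume e: "0 < e"
  define d where "d = min 1 (e / (q a + q b + 1))"
  have qa: "0 \<le> q a" and qb: "0 \<le> q b" by (rule q_nonneg)+
  have d: "0 < d" "d \<le> 1" "d \<le> e / (q a + q b + 1)" using e qa qb by (auto simp: d_def)
  obtain m1 where m1: "m1 \<in> M" "norm (a - m1) < q a + d" using q_approx[of d a] d by auto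
  obtain m2 where m2: "m2 \<in> M" "norm (b - m2) < q b + d" using q_approx[of d b] d by auto
  have "m1 * b + a * m2 - m1 * m2 \<in> M" using m1 m2 by (intro Mdiff Madd Mmult Mmult2)
  then have "q (a * b) \<le> norm (a * b - (m1 * b + a * m2 - m1 * m2))" by (rule q_le)
  also have "\<dots> = norm ((a - m1) * (b - m2))" by (simp add: algebra_simps)
  also have "\<dots> \<le> norm (a - m1) * norm (b - m2)" by (rule norm_mult_ineq)
  also have "\<dots> \<le> (q a + d) * (q b + d)" using m1(2) m2(2) qa d(1) by (intro mult_mono) (linarith, linarith, linarith, simp)
  also have "\<dots> = q a * q b + d * (q a + q b + d)" by (simp add: algebra_simps)
  also have "\<dots> \<le> q a * q b + d * (q a + q b + 1)" using d qa qb by simp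
  also have "d * (q a + q b + 1) \<le> e" using d qa qb by (simp add: le_divide_eq)
  finally show "q (a * b) \<le> q a * q b + e" by simp
qed
lemma q_mult_norm: "q (a * b) \<le> norm a * q b"
  using q_mult[of a b] q_le_norm[of a] q_nonneg[of b] by (meson mult_right_mono order_trans)
lemma q_emb: "q (emb c * a) \<le> cmod c * q a"
proof (cases "c = 0")
  case True then show ?thesis by simp
next
  case False
  have "q a \<ge> q (emb c * a) / cmod c"
  proof (rule q_greatest)
    fix m assume "m \<in> M"
    then have "q (emb c * a) \<le> norm (emb c * a - emb c * m)" by (intro q_le Mmult)
    also have "\<dots> = cmod c * norm (a - m)" by (simp add: right_diff_distrib[symmetric] norm_emb_mult)
    finally show "q (emb c * a) / cmod c \<le> norm (a - m)" using False by (simp add: divide_le_eq mult.commute)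
  qed
  then show ?thesis using False by (simp add: divide_le_eq mult.commute)
qed
lemma q_sum: "q (\<Sum>i\<in>A. f i) \<le> (\<Sum>i\<in>A. q (f i))"
proof (induction A rule: infinite_finite_induct)
  case (insert x F)
  then show ?case using q_add[of "f x" "sum f F"] by simp
qed simp_all
lemma q_power: "q (a ^ Suc n) \<le> q a ^ Suc n"
proof (induction n)
  case (Suc n)
  have "q (a ^ Suc (Suc n)) \<le> q a * q (a ^ Suc n)" using q_mult[of a "a ^ Suc n"] by simp
  also have "\<dots> \<le> q a * q a ^ Suc n" by (rule mult_left_mono[OF Suc q_nonneg])
  finally show ?case by simp
qed simp
lemma q_one: "1/2 \<le> q 1"
proof (rule ccontr)
  assume "\<not> 1/2 \<le> q 1"
  then obtain m where m: "m \<in> M" "norm (1 - m) < 1/2" using q_approx[of "1/2 - q 1" 1] by auto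
  then obtain w where "(1 - (1 - m)) * w = 1" using neumann[of "1 - m"] by auto
  then have "m * w = 1" by simp
  then have "1 \<in> M" using Mmult2[OF m(1), of w] by simp
  then show False using one_notin by simp
qed

end

lemma ideal_extend:
  fixes M :: "'a::comm_ring_1 set"
  assumes "ring_ideal M"
  shows "ring_ideal {m + u * b | m b. m \<in> M}"
proof -
  have M: "0 \<in> M" "\<And>x y. x\<in>M \<Longrightarrow> y\<in>M \<Longrightarrow> x+y \<in> M" "\<And>x. x\<in>M \<Longrightarrow> -x \<in> M"
    "\<And>x y. x \<in> M \<Longrightarrow> y*x \<in> M" using assms unfolding ring_ideal_def by blast+
  let ?J = "{m + u * b | m b. m \<in> M}"
  have A: "0 \<in> ?J"
  proof -
    have "(0::'a) = 0 + u * 0" by simp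
    with M(1) show ?thesis by blast
  qed
  have B: "\<forall>x\<in>?J. \<forall>y\<in>?J. x + y \<in> ?J"
  proof (intro ballI)
    fix x y assume "x \<in> ?J" "y \<in> ?J"
    then obtain m1 b1 m2 b2 where h: "x = m1 + u*b1" "m1\<in>M" "y = m2+u*b2" "m2 \<in> M" by blast
    then have "x + y = (m1+m2) + u*(b1+b2)" by (simp add: algebra_simps)
    with M(2)[OF h(2) h(4)] show "x + y \<in> ?J" by blast
  qed
  have C: "\<forall>x\<in>?J. - x \<in> ?J"
  proof (intro ballI)
    fix x assume "x \<in> ?J"
    then obtain m1 b1 where h: "x = m1 + u*b1" "m1\<in>M" by blast
    then have "- x = (-m1) + u*(-b1)" by (simp add: algebra_simps)
    with M(3)[OF h(2)] show "- x \<in> ?J" by blast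
  qed
  have D: "\<forall>x\<in>?J. \<forall>y. y * x \<in> ?J"
  proof (intro ballI allI)
    fix x y assume "x \<in> ?J"
    then obtain m1 b1 where h: "x = m1 + u*b1" "m1\<in>M" by blast
    then have "y * x = (y * m1) + u*(y * b1)" by (simp add: algebra_simps)
    with M(4)[OF h(2)] show "y * x \<in> ?J" by blast
  qed
  show ?thesis unfolding ring_ideal_def using A B C D by blast
qed

definition om :: "nat \<Rightarrow> complex" where "om n = exp (2 * complex_of_real pi * \<i> / of_nat n)"

lemma om_pow: "om n ^ j = exp (2 * complex_of_real pi * \<i> * of_nat j / of_nat n)"
proof -
  have "om n ^ j = exp (of_nat j * (2 * complex_of_real pi * \<i> / of_nat n))"
    unfolding om_def by (rule exp_of_nat_mult[symmetric])
  also have "of_nat j * (2 * complex_of_real pi * \<i> / of_nat n) = 2 * complex_of_real pi * \<i> * of_nat j / of_nat n"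
    by simp
  finally show ?thesis .
qed

lemma om_norm: "cmod (om n) = 1"
  unfolding om_def by (simp add: norm_exp_eq_Re)

lemma roots_pow: "n \<ge> 1 \<Longrightarrow> (om n ^ k * r) ^ n = r ^ n"
proof -
  assume n: "n \<ge> 1"
  have "om n ^ n = 1" using complex_root_unity[of n 1] n by (simp add: om_pow[of n 1, simplified])
  then have "(om n ^ k) ^ n = 1" by (simp add: power_mult[symmetric] mult.commute[of k] power_mult)
  then show ?thesis by (simp add: power_mult_distrib)
qed

lemma roots_norm: "cmod (om n ^ k * r) = cmod r"
  by (simp add: norm_mult norm_power om_norm)

lemma roots_sum:
  assumes n: "n \<ge> 1" and j: "j < n"
  shows "(\<Sum>k<n. (om n ^ k * r) ^ j) = (if j = 0 then of_nat n else 0)"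
proof (cases "j = 0")
  case True then show ?thesis by simp
next
  case False
  have eq: "(\<Sum>k<n. (om n ^ k * r) ^ j) = r ^ j * (\<Sum>k<n. (om n ^ j) ^ k)"
    by (simp add: sum_distrib_left power_mult_distrib power_mult[symmetric] mult.commute)
  have nd: "\<not> n dvd j" using nat_dvd_not_less[of j n] j False by simp
  have ne: "om n ^ j \<noteq> 1"
    using complex_root_unity_eq_1[of n j] n nd by (simp add: om_pow)
  have pn: "(om n ^ j) ^ n = 1"
    using complex_root_unity[of n j] n by (simp add: om_pow)
  have "(\<Sum>k<n. (om n ^ j) ^ k) = 0"
    using ne pn by (simp add: sum_gp_strict)
  with eq False show ?thesis by simp
qed

locale gmctx = mid sc M for sc :: "complex \<Rightarrow> 'a::{real_normed_algebra,comm_ring_1,banach} \<Rightarrow> 'a"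
  and M :: "'a set" +
  fixes x :: 'a
  assumes H: "\<And>c. x - emb c \<notin> M"
begin

definition K0 :: real where "K0 = 2 * (norm (1::'a) + 1)"
lemma K0_pos: "0 < K0" unfolding K0_def by (simp add: add_nonneg_pos)
lemma neu: "norm (y::'a) \<le> 1/2 \<Longrightarrow> \<exists>w. (1 - y) * w = 1 \<and> norm w \<le> K0"
  using neumann[of y] unfolding K0_def by blast

lemma ex_inv: "\<exists>r. (x - emb c) * r - 1 \<in> M"
proof -
  let ?J = "{m + (x - emb c) * b | m b. m \<in> M}"
  have J: "ring_ideal ?J" by (rule ideal_extend[OF idM])
  have sub: "M \<subseteq> ?J"
  proof
    fix m assume "m \<in> M"
    moreover have "m = m + (x - emb c) * 0" by simp
    ultimately show "m \<in> ?J" by blast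
  qed
  have "x - emb c \<in> ?J"
  proof -
    have "x - emb c = 0 + (x - emb c) * 1" by simp
    then show ?thesis using M0 by blast
  qed
  then have "?J \<noteq> M" using H by blast
  then have "?J = UNIV" using maxM J sub unfolding maximal_ideal_def by blast
  then have "1 \<in> ?J" by blast
  then obtain m b where mb: "1 = m + (x - emb c) * b" "m \<in> M" by blast
  then have "(x - emb c) * b - 1 = - m" by (simp add: algebra_simps)
  then have "(x - emb c) * b - 1 \<in> M" using Mneg[OF mb(2)] by simp
  then show ?thesis by blast
qed

definition R :: "complex \<Rightarrow> 'a" where "R c = (SOME r. (x - emb c) * r - 1 \<in> M)"
lemma R: "(x - emb c) * R c - 1 \<in> M"
  unfolding R_def by (rule someI_ex[OF ex_inv])

lemma R_uniq: "(x - emb c) * y - 1 \<in> M \<Longrightarrow> y - R c \<in> M"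
proof -
  assume h: "(x - emb c) * y - 1 \<in> M"
  have "y - R c = R c * ((x - emb c) * y - 1) - y * ((x - emb c) * R c - 1)"
    by (simp add: algebra_simps)
  also have "\<dots> \<in> M" by (intro Mdiff Mmult h R)
  finally show ?thesis .
qed

definition N :: "complex \<Rightarrow> real" where "N c = q (R c)"

lemma N_nonneg: "0 \<le> N c" unfolding N_def by (rule q_nonneg)

lemma N_lower: "1/2 \<le> norm (x - emb c) * N c"
proof -
  have "q 1 = q ((x - emb c) * R c)" using q_cong_eq[of 1 "(x - emb c) * R c"] Mneg[OF R[of c]]
    by simp
  also have "\<dots> \<le> norm (x - emb c) * N c" unfolding N_def by (rule q_mult_norm)
  finally show ?thesis using q_one by simp
qed

lemma N_pos: "0 < N c"
proof (rule ccontr)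
  assume "\<not> 0 < N c"
  then have "N c = 0" using N_nonneg[of c] by simp
  then show False using N_lower[of c] by simp
qed

lemma decay:
  assumes c: "2 * norm x + 1 \<le> cmod c"
  shows "N c \<le> K0 / cmod c"
proof -
  have cpos: "0 < cmod c" using c norm_ge_zero[of x] by linarith
  then have c0: "c \<noteq> 0" by auto
  define y where "y = emb (1/c) * x"
  have "norm y = norm x / cmod c" by (simp add: y_def norm_emb_mult norm_divide)
  also have "\<dots> \<le> 1/2" using c cpos by (simp add: divide_le_eq)
  finally obtain w where w: "(1 - y) * w = 1" "norm w \<le> K0" using neu by blast
  define r where "r = - (emb (1/c) * w)"
  have e: "emb (1/c) * emb c = 1" using emb_mult[of "1/c" c] c0 by simp
  have e2: "emb c * emb (1/c) = 1" using e by (simp add: mult.commute)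
  have "(x - emb c) * r = (emb (1/c) * emb c) * w - (emb (1/c) * x) * w"
    by (simp add: r_def algebra_simps)
  also have "\<dots> = (1 - y) * w" by (simp add: e e2 y_def algebra_simps)
  finally have "(x - emb c) * r - 1 = 0" using w by simp
  then have "r - R c \<in> M" using R_uniq[of c r] by simp
  then have "N c = q r" unfolding N_def using q_cong_eq[of r "R c"] by simp
  also have "\<dots> \<le> norm r" by (rule q_le_norm)
  also have "\<dots> = norm w / cmod c" by (simp add: r_def norm_emb_mult norm_divide)
  also have "\<dots> \<le> K0 / cmod c" using w cpos by (simp add: divide_right_mono)
  finally show ?thesis .
qed

lemma resolvent: "R l - R u - emb (l - u) * (R l * R u) \<in> M"
proof -
  have "R l - R u - emb (l - u) * (R l * R u) =
        ((x - emb l) * R l - 1) * R u - R l * ((x - emb u) * R u - 1)"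
    by (simp add: emb_diff algebra_simps)
  also have "\<dots> \<in> M" by (intro Mdiff Mmult Mmult2 R)
  finally show ?thesis .
qed

lemma local_bound: "\<exists>d>0. \<forall>l. cmod (l - u) < d \<longrightarrow> N l \<le> 2 * K0 * N u"
proof -
  have Nu: "0 < N u" by (rule N_pos)
  obtain m' where m': "m' \<in> M" "norm (R u - m') < q (R u) + N u"
    using q_approx[OF Nu, of "R u"] by blast
  define \<rho> where "\<rho> = R u - m'"
  have nrho: "norm \<rho> \<le> 2 * N u" using m' by (simp add: \<rho>_def N_def)
  have rhoM: "(x - emb u) * \<rho> - 1 \<in> M"
  proof -
    have "(x - emb u) * \<rho> - 1 = ((x - emb u) * R u - 1) - (x - emb u) * m'"
      by (simp add: \<rho>_def algebra_simps)
    also have "\<dots> \<in> M" by (intro Mdiff Mmult R m')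
    finally show ?thesis .
  qed
  define d where "d = 1 / (4 * N u)"
  have d: "0 < d" using Nu by (simp add: d_def)
  have "N l \<le> 2 * K0 * N u" if l: "cmod (l - u) < d" for l
  proof -
    define y where "y = emb (l - u) * \<rho>"
    have "norm y = cmod (l - u) * norm \<rho>" by (simp add: y_def norm_emb_mult)
    also have "\<dots> \<le> d * (2 * N u)" using l nrho d by (intro mult_mono) auto
    also have "\<dots> = 1/2" using Nu by (simp add: d_def)
    finally obtain w where w: "(1 - y) * w = 1" "norm w \<le> K0" using neu by blast
    have "(x - emb l) * (\<rho> * w) - 1 = ((x - emb u) * \<rho> - 1) * w + ((1 - y) * w - 1)"
      by (simp add: y_def emb_diff algebra_simps)
    also have "\<dots> = ((x - emb u) * \<rho> - 1) * w" using w by simp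
    also have "\<dots> \<in> M" by (intro Mmult2 rhoM)
    finally have "\<rho> * w - R l \<in> M" by (rule R_uniq)
    then have "N l = q (\<rho> * w)" unfolding N_def using q_cong_eq[of "\<rho> * w" "R l"] by simp
    also have "\<dots> \<le> norm (\<rho> * w)" by (rule q_le_norm)
    also have "\<dots> \<le> norm \<rho> * norm w" by (rule norm_mult_ineq)
    also have "\<dots> \<le> (2 * N u) * K0" using nrho w(2) Nu by (intro mult_mono) auto
    finally show ?thesis by (simp add: mult_ac)
  qed
  with d show ?thesis by blast
qed

end

context gmctx begin

lemma N_cont: "isCont N u"
proof -
  obtain d where d: "d > 0" "\<forall>l. cmod (l - u) < d \<longrightarrow> N l \<le> 2*K0*N u" using local_bound by blast
  define C where "C = 2*K0*N u*N u"
  have C0: "0 \<le> C" unfolding C_def using K0_pos N_nonneg[of u] by simp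
  have est: "\<bar>N l - N u\<bar> \<le> cmod (l - u) * C" if l: "cmod (l-u) < d" for l
  proof -
    have "\<bar>N l - N u\<bar> \<le> q (R l - R u)" unfolding N_def by (rule q_abs_diff)
    also have "q (R l - R u) = q (emb (l - u) * (R l * R u))" by (rule q_cong_eq) (rule resolvent)
    also have "\<dots> \<le> cmod (l-u) * q (R l * R u)" by (rule q_emb)
    also have "\<dots> \<le> cmod (l-u) * (N l * N u)" unfolding N_def by (intro mult_left_mono q_mult) simp
    also have "N l * N u \<le> 2*K0*N u * N u" using d l N_nonneg[of u] by (intro mult_right_mono) auto
    then have "cmod (l-u) * (N l * N u) \<le> cmod (l-u) * C" unfolding C_def by (intro mult_left_mono) auto
    finally show ?thesis .
  qed
  show ?thesis unfolding continuous_at_real_range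
  proof (intro allI impI)
    fix e :: real assume e: "0 < e"
    define d' where "d' = min d (e / (C + 1))"
    have d': "0 < d'" using d e C0 by (simp add: d'_def)
    have "\<bar>N l - N u\<bar> < e" if l: "norm (l - u) < d'" for l
    proof -
      have "\<bar>N l - N u\<bar> \<le> cmod (l - u) * C" using l by (intro est) (simp add: d'_def)
      also have "\<dots> \<le> cmod (l - u) * (C + 1)" by (intro mult_left_mono) auto
      also have "\<dots> < (e / (C + 1)) * (C + 1)"
        using l C0 by (intro mult_strict_right_mono) (auto simp: d'_def)
      also have "\<dots> = e" using C0 by simp
      finally show ?thesis .
    qed
    with d' show "\<exists>d>0. \<forall>l. norm (l - u) < d \<longrightarrow> \<bar>N l - N u\<bar> < e" by blast
  qed
qed

lemma N_max: "\<exists>l0. \<forall>l. N l \<le> N l0"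
proof -
  have N0: "0 < N 0" by (rule N_pos)
  define L where "L = 2 * norm x + 1 + K0 / N 0"
  have KN: "0 \<le> K0 / N 0" using K0_pos N0 by simp
  have L0: "0 \<le> L" unfolding L_def using KN norm_ge_zero[of x] by linarith
  have cont: "continuous_on (cball 0 L) N" by (intro continuous_at_imp_continuous_on ballI N_cont)
  have ne: "cball (0::complex) L \<noteq> {}" using L0 by simp
  obtain l0 where l0: "l0 \<in> cball 0 L" "\<forall>l\<in>cball 0 L. N l \<le> N l0"
    using continuous_attains_sup[OF compact_cball ne cont] by blast
  have "N l \<le> N l0" for l
  proof (cases "l \<in> cball 0 L")
    case True with l0 show ?thesis by blast
  next
    case False
    then have lL: "L < cmod l" by simp
    then have "2*norm x + 1 \<le> cmod l" unfolding L_def using KN by linarith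
    then have "N l \<le> K0 / cmod l" by (rule decay)
    also have "K0 / cmod l \<le> N 0"
    proof -
      have lp: "0 < cmod l" using lL L0 by linarith
      have "K0 / N 0 < cmod l" using lL unfolding L_def using norm_ge_zero[of x] by linarith
      then have "K0 < cmod l * N 0" using N0 by (simp add: divide_less_eq)
      then show ?thesis using lp by (simp add: divide_le_eq mult.commute)
    qed
    also have "N 0 \<le> N l0" using l0 L0 by simp
    finally show ?thesis .
  qed
  then show ?thesis by blast
qed

end

context gmctx begin

lemma expand_one:
  "R (z + s) - (\<Sum>j<n. emb s ^ j * R z ^ Suc j) - emb s ^ n * (R z ^ n * R (z + s)) \<in> M"
proof -
  define P where "P = R z"
  define Q where "Q = R (z + s)"
  define t where "t = emb s * P"
  define G where "G = (\<Sum>j<n. t ^ j)"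
  have res: "Q - P - emb s * (Q * P) \<in> M" using resolvent[of "z + s" z] by (simp add: P_def Q_def)
  have geo: "(1 - t) * G = 1 - t ^ n" unfolding G_def by (rule one_diff_power_eq[symmetric])
  have PG: "P * G = (\<Sum>j<n. emb s ^ j * P ^ Suc j)"
    unfolding G_def t_def by (simp add: sum_distrib_left power_mult_distrib mult_ac)
  have "(Q - P - emb s * (Q * P)) * G = Q * ((1 - t) * G) - P * G"
    by (simp add: t_def algebra_simps)
  also have "\<dots> = Q * (1 - t ^ n) - (\<Sum>j<n. emb s ^ j * P ^ Suc j)" by (simp only: geo PG)
  also have "\<dots> = Q - (\<Sum>j<n. emb s ^ j * P ^ Suc j) - emb s ^ n * (P ^ n * Q)"
    by (simp add: t_def power_mult_distrib algebra_simps)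
  finally have eq: "(Q - P - emb s * (Q * P)) * G = Q - (\<Sum>j<n. emb s ^ j * P ^ Suc j) - emb s ^ n * (P ^ n * Q)" .
  have "(Q - P - emb s * (Q * P)) * G \<in> M" by (rule Mmult2[OF res])
  with eq show ?thesis by (simp add: P_def Q_def)
qed

lemma mean_value:
  assumes n: "n \<ge> 1" and mx: "\<And>l. N l \<le> m" and z: "N z = m" and r: "cmod r * m \<le> 1/4"
  shows "m - N (z + r) \<le> m * (1/2)^n"
proof -
  define P where "P = R z"
  define s where "s k = om n ^ k * r" for k
  define S where "S = (\<Sum>k<n. R (z + s k))"
  have m0: "0 < m" using z N_pos[of z] by simp
  have A: "(\<Sum>k<n. (\<Sum>j<n. emb (s k) ^ j * P ^ Suc j)) = emb (of_nat n) * P"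
  proof -
    have "(\<Sum>k<n. (\<Sum>j<n. emb (s k) ^ j * P ^ Suc j)) = (\<Sum>j<n. (\<Sum>k<n. emb (s k) ^ j * P ^ Suc j))"
      by (rule sum.swap)
    also have "\<dots> = (\<Sum>j<n. emb (\<Sum>k<n. s k ^ j) * P ^ Suc j)"
      by (simp add: emb_sum emb_power sum_distrib_right)
    also have "\<dots> = (\<Sum>j<n. if j = 0 then emb (of_nat n) * P else 0)"
    proof (rule sum.cong[OF refl])
      fix j assume "j \<in> {..<n}"
      then have "(\<Sum>k<n. s k ^ j) = (if j = 0 then of_nat n else 0)"
        unfolding s_def using roots_sum[OF n, of j r] by simp
      then show "emb (\<Sum>k<n. s k ^ j) * P ^ Suc j = (if j = 0 then emb (of_nat n) * P else 0)"
        by simp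
    qed
    also have "\<dots> = emb (of_nat n) * P" using n by (simp add: sum.delta)
    finally show ?thesis .
  qed
  have B: "(\<Sum>k<n. emb (s k) ^ n * (P ^ n * R (z + s k))) = emb (r ^ n) * (P ^ n * S)"
  proof -
    have "emb (s k) ^ n = emb (r ^ n)" for k
      unfolding s_def using roots_pow[OF n, of k r] by (simp add: emb_power[symmetric])
    then show ?thesis by (simp add: S_def sum_distrib_left)
  qed
  have "(\<Sum>k<n. R (z + s k) - (\<Sum>j<n. emb (s k) ^ j * R z ^ Suc j) - emb (s k) ^ n * (R z ^ n * R (z + s k))) \<in> M"
    by (rule Msum) (rule expand_one)
  also have "(\<Sum>k<n. R (z + s k) - (\<Sum>j<n. emb (s k) ^ j * R z ^ Suc j) - emb (s k) ^ n * (R z ^ n * R (z + s k)))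
      = S - emb (of_nat n) * P - emb (r ^ n) * (P ^ n * S)"
    using A B by (simp add: sum_subtractf S_def P_def)
  finally have key: "S - emb (of_nat n) * P - emb (r ^ n) * (P ^ n * S) \<in> M" .
  have qS1: "q S \<le> (\<Sum>k<n. N (z + s k))" unfolding S_def N_def by (rule q_sum)
  obtain n' where n': "n = Suc n'" using n by (cases n) auto
  have "(\<Sum>k<n. N (z + s k)) = N (z + s 0) + (\<Sum>k<n'. N (z + s (Suc k)))"
    unfolding n' by (rule sum.lessThan_Suc_shift)
  also have "s 0 = r" by (simp add: s_def)
  also have "(\<Sum>k<n'. N (z + s (Suc k))) \<le> of_nat n' * m"
    using sum_bounded_above[of "{..<n'}" "\<lambda>k. N (z + s (Suc k))" m] mx by simp
  finally have qS: "q S \<le> N (z + r) + of_nat n' * m" using qS1 by simp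
  have qS2: "q S \<le> of_nat n * m"
    using qS mx[of "z + r"] n' by (simp add: algebra_simps)
  have qP: "q P = m" using z by (simp add: N_def P_def)
  have "of_nat n * m \<le> q (emb (of_nat n) * P)"
  proof -
    have "q P = q (emb (1 / of_nat n) * (emb (of_nat n) * P))"
      using n by (simp add: mult.assoc[symmetric] emb_mult[symmetric])
    also have "\<dots> \<le> cmod (1 / of_nat n) * q (emb (of_nat n) * P)" by (rule q_emb)
    finally have "m \<le> q (emb (of_nat n) * P) / of_nat n" using qP n by (simp add: norm_divide)
    then show ?thesis using n by (simp add: le_divide_eq mult.commute)
  qed
  also have "q (emb (of_nat n) * P) = q (S - emb (r ^ n) * (P ^ n * S))"
  proof (rule q_cong_eq)
    have "emb (of_nat n) * P - (S - emb (r ^ n) * (P ^ n * S)) = - (S - emb (of_nat n) * P - emb (r ^ n) * (P ^ n * S))"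
      by (simp add: algebra_simps)
    then show "emb (of_nat n) * P - (S - emb (r ^ n) * (P ^ n * S)) \<in> M" using Mneg[OF key] by (simp only:)
  qed
  also have "\<dots> \<le> q S + q (emb (r ^ n) * (P ^ n * S))" by (rule q_diff)
  also have "q (emb (r ^ n) * (P ^ n * S)) \<le> cmod (r ^ n) * q (P ^ n * S)" by (rule q_emb)
  also have "q (P ^ n * S) \<le> q (P ^ n) * q S" by (rule q_mult)
  also have "q (P ^ n) \<le> m ^ n" using q_power[of P n'] qP n' by simp
  also have "cmod (r ^ n) * (m ^ n * q S) \<le> (1/4)^n * (of_nat n * m)"
  proof -
    have "cmod (r ^ n) * m ^ n = (cmod r * m) ^ n" by (simp add: norm_power power_mult_distrib)
    also have "\<dots> \<le> (1/4)^n" using r m0 by (intro power_mono) auto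
    finally have "cmod (r ^ n) * m ^ n \<le> (1/4)^n" .
    then have "(cmod (r ^ n) * m ^ n) * q S \<le> (1/4)^n * (of_nat n * m)"
      using qS2 q_nonneg[of S] by (intro mult_mono) auto
    then show ?thesis by (simp add: mult_ac)
  qed
  finally have main: "of_nat n * m \<le> q S + (1/4)^n * (of_nat n * m)"
    using q_nonneg[of S] q_nonneg[of "P ^ n * S"] q_nonneg[of "P^n"] m0
    by - (simp_all add: mult_left_mono mult_right_mono)
  have nn: "of_nat n * m = of_nat n' * m + m" unfolding n' by (simp add: algebra_simps)
  have h1: "m - N (z + r) \<le> (1/4)^n * (of_nat n * m)" using main qS nn by linarith
  have "real n < real (2^n)" using less_exp[of n] by (simp only: of_nat_less_iff)
  then have lt: "real n < 2^n" by simp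
  have h3: "real n * (1/2)^n \<le> 1" using lt by (simp add: power_divide field_simps)
  have "(1/4::real)^n * (of_nat n * m) = m * (1/2)^n * (real n * (1/2)^n)"
    by (simp add: power_mult_distrib[symmetric] mult_ac)
  also have "\<dots> \<le> m * (1/2)^n * 1" using h3 m0 by (intro mult_left_mono) auto
  finally show ?thesis using h1 by simp
qed

lemma step_prop:
  assumes mx: "\<And>l. N l \<le> m" and z: "N z = m" and r: "cmod r * m \<le> 1/4"
  shows "N (z + r) = m"
proof (rule ccontr)
  assume ne: "N (z + r) \<noteq> m"
  have m0: "0 < m" using z N_pos[of z] by simp
  define \<delta> where "\<delta> = m - N (z + r)"
  have d0: "0 < \<delta>" using ne mx[of "z + r"] by (simp add: \<delta>_def)
  obtain k where k: "(1/2::real)^k < \<delta> / m" using real_arch_pow_inv[of "\<delta> / m" "1/2"] d0 m0 by auto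
  have a: "m * (1/2)^k < \<delta>" using k m0 by (simp add: less_divide_eq mult.commute)
  have b: "0 \<le> m * (1/2::real)^k" using m0 by simp
  have c: "m * (1/2::real)^(Suc k) = m * (1/2)^k / 2" by simp
  have "m * (1/2)^(Suc k) < \<delta>" using a b c by linarith
  moreover have "\<delta> \<le> m * (1/2)^(Suc k)" unfolding \<delta>_def by (rule mean_value[OF _ mx z r]) simp
  ultimately show False by simp
qed

lemma propagate:
  assumes mx: "\<And>l. N l \<le> N l0"
  shows "cmod w \<le> of_nat k / (4 * N l0) \<Longrightarrow> N (l0 + w) = N l0"
proof (induction k arbitrary: w)
  case 0
  then show ?case by simp
next
  case (Suc k)
  define m where "m = N l0"
  have m0: "0 < m" unfolding m_def by (rule N_pos)
  define w' where "w' = w * of_real (real k / real (Suc k))"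
  define r where "r = w * of_real (1 / real (Suc k))"
  have c1: "real k / real (Suc k) + 1 / real (Suc k) = 1" by (simp add: field_simps)
  have "w' + r = w * (of_real (real k / real (Suc k)) + of_real (1 / real (Suc k)))"
    unfolding w'_def r_def by (rule distrib_left[symmetric])
  also have "\<dots> = w * of_real (real k / real (Suc k) + 1 / real (Suc k))" by simp
  also have "\<dots> = w" by (simp only: c1) simp
  finally have wr: "w = w' + r" by simp
  have e1: "cmod w' = cmod w * \<bar>real k / real (Suc k)\<bar>" by (simp only: w'_def norm_mult norm_of_real)
  have e2: "\<bar>real k / real (Suc k)\<bar> = real k / real (Suc k)" by simp
  have "cmod w' = cmod w * (real k / real (Suc k))" using e1 e2 by simp
  also have "\<dots> \<le> (real (Suc k) / (4 * m)) * (real k / real (Suc k))"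
    using Suc.prems by (intro mult_right_mono) (auto simp: m_def)
  also have "\<dots> = real k / (4 * m)" by simp
  finally have IH: "N (l0 + w') = m" using Suc.IH unfolding m_def by blast
  have e3: "cmod r = cmod w * \<bar>1 / real (Suc k)\<bar>" by (simp only: r_def norm_mult norm_of_real)
  have "cmod r = cmod w / real (Suc k)" using e3 by simp
  also have "\<dots> \<le> (real (Suc k) / (4 * m)) / real (Suc k)"
    using Suc.prems by (intro divide_right_mono) (auto simp: m_def)
  also have "\<dots> = 1 / (4 * m)" by simp
  finally have "cmod r * m \<le> 1/4" using m0 by (simp add: le_divide_eq)
  then have "N (l0 + w' + r) = m" using step_prop[of m "l0 + w'" r] mx IH unfolding m_def by blast
  then show ?case unfolding wr m_def by (simp add: add.assoc)
qed

theorem contradiction: False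
proof -
  obtain l0 where mx: "\<And>l. N l \<le> N l0" using N_max by blast
  define m where "m = N l0"
  have m0: "0 < m" unfolding m_def by (rule N_pos)
  define B where "B = 2 * norm x + 1 + K0 / m + 1"
  have KB: "0 \<le> K0 / m" using K0_pos m0 by simp
  define l where "l = complex_of_real B"
  have Bpos: "0 < B" unfolding B_def using KB norm_ge_zero[of x] by linarith
  have cl: "cmod l = B" using Bpos by (simp add: l_def)
  obtain k where k: "4 * m * cmod (l - l0) \<le> real k" using real_arch_simple by blast
  have "cmod (l - l0) \<le> real k / (4 * m)" using k m0 by (simp add: le_divide_eq mult.commute)
  then have "N (l0 + (l - l0)) = m" using propagate[OF mx] unfolding m_def by blast
  then have Nl: "N l = m" by simp
  have "2 * norm x + 1 \<le> cmod l" using cl KB unfolding B_def by linarith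
  then have "N l \<le> K0 / cmod l" by (rule decay)
  also have "K0 / cmod l < m"
  proof -
    have "K0 / m < B" unfolding B_def using norm_ge_zero[of x] by linarith
    then have "K0 < B * m" using m0 by (simp add: divide_less_eq)
    then show ?thesis using cl Bpos by (simp add: divide_less_eq mult.commute)
  qed
  finally show False using Nl by simp
qed

end

context mid begin

lemma gm: "\<exists>c. x - emb c \<in> M"
proof (rule ccontr)
  assume "\<not> (\<exists>c. x - emb c \<in> M)"
  then have H: "\<And>c. x - emb c \<notin> M" by blast
  have "gmctx sc M x" by (intro gmctx.intro mid_axioms gmctx_axioms.intro H)
  then show False by (rule gmctx.contradiction)
qed

lemma gm_unique: "x - emb c \<in> M \<Longrightarrow> x - emb d \<in> M \<Longrightarrow> c = d"
proof (rule ccontr)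
  assume h: "x - emb c \<in> M" "x - emb d \<in> M" "c \<noteq> d"
  have "emb (d - c) = (x - emb c) - (x - emb d)" by (simp add: emb_diff)
  also have "\<dots> \<in> M" by (rule Mdiff[OF h(1) h(2)])
  finally have "emb (1 / (d - c)) * emb (d - c) \<in> M" by (rule Mmult)
  moreover have "emb (1 / (d - c)) * emb (d - c) = 1" using h(3) emb_mult[of "1 / (d - c)" "d - c"] by simp
  ultimately show False using one_notin by simp
qed

definition chi :: "'a \<Rightarrow> complex" where "chi y = (THE c. y - emb c \<in> M)"

lemma chi_mem: "y - emb (chi y) \<in> M"
proof -
  obtain c where c: "y - emb c \<in> M" using gm by blast
  have "\<exists>!c. y - emb c \<in> M" using c gm_unique by blast
  then show ?thesis unfolding chi_def by (rule theI')
qed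

lemma chi_eq: "y - emb c \<in> M \<Longrightarrow> chi y = c"
  using gm_unique[OF chi_mem] by blast

lemma chi_char: "chi \<in> characters sc"
proof -
  have a: "chi (y + z) = chi y + chi z" for y z
  proof (rule chi_eq)
    have "y + z - emb (chi y + chi z) = (y - emb (chi y)) + (z - emb (chi z))" by (simp add: emb_add)
    then show "y + z - emb (chi y + chi z) \<in> M" using Madd[OF chi_mem[of y] chi_mem[of z]] by (simp only:)
  qed
  have b: "chi (sc c y) = c * chi y" for c y
  proof (rule chi_eq)
    have "sc c y - emb (c * chi y) = emb c * (y - emb (chi y))" by (simp add: sc_emb emb_mult algebra_simps)
    then show "sc c y - emb (c * chi y) \<in> M" using Mmult[OF chi_mem] by simp
  qed
  have m: "chi (y * z) = chi y * chi z" for y z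
  proof (rule chi_eq)
    have "y * z - emb (chi y * chi z) = (y - emb (chi y)) * z + emb (chi y) * (z - emb (chi z))"
      by (simp add: emb_mult algebra_simps)
    then show "y * z - emb (chi y * chi z) \<in> M" using Madd[OF Mmult2[OF chi_mem] Mmult[OF chi_mem]] by simp
  qed
  have "chi 1 = 1" by (rule chi_eq) simp
  then have n: "chi \<noteq> (\<lambda>_. 0)" by (metis one_neq_zero)
  show ?thesis unfolding characters_def using a b m n by blast
qed

lemma chi_ker: "y \<in> M \<Longrightarrow> chi y = 0"
  by (rule chi_eq) simp

end

lemma char_exists:
  fixes sc :: "complex \<Rightarrow> 'a::{real_normed_algebra,comm_ring_1,banach} \<Rightarrow> 'a"
  assumes "complex_scaling sc" "maximal_ideal M"
  shows "\<exists>\<phi>\<in>characters sc. \<forall>y\<in>M. \<phi> y = 0"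
proof -
  interpret mid sc M by (intro mid.intro cba.intro mid_axioms.intro assms)
  show ?thesis using chi_char chi_ker by blast
qed

lemma char_props:
  fixes sc :: "complex \<Rightarrow> 'a::{real_normed_algebra,comm_ring_1,banach} \<Rightarrow> 'a"
  assumes cs: "complex_scaling sc" and ph: "\<phi> \<in> characters sc"
  shows "\<phi> 1 = 1" "\<phi> (x + y) = \<phi> x + \<phi> y" "\<phi> (x * y) = \<phi> x * \<phi> y"
    "\<phi> (sc c x) = c * \<phi> x" "\<phi> (r *\<^sub>R x) = complex_of_real r * \<phi> x"
    "\<phi> (x ^ n) = \<phi> x ^ n" "\<phi> (sum f A) = (\<Sum>i\<in>A. \<phi> (f i))"
    "\<phi> (x - y) = \<phi> x - \<phi> y"
proof -
  interpret cba sc by (rule cba.intro[OF cs])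
  have add: "\<And>x y. \<phi> (x + y) = \<phi> x + \<phi> y" and sm: "\<And>c x. \<phi> (sc c x) = c * \<phi> x"
    and mul: "\<And>x y. \<phi> (x * y) = \<phi> x * \<phi> y" and nz: "\<phi> \<noteq> (\<lambda>_. 0)"
    using ph unfolding characters_def by blast+
  show "\<phi> (x + y) = \<phi> x + \<phi> y" "\<phi> (x * y) = \<phi> x * \<phi> y" "\<phi> (sc c x) = c * \<phi> x" by (rule add mul sm)+
  obtain z where z: "\<phi> z \<noteq> 0" using nz by auto
  have "\<phi> z * \<phi> 1 = \<phi> z * 1" using mul[of z 1] by simp
  then show one: "\<phi> 1 = 1" using z by simp
  show "\<phi> (r *\<^sub>R x) = complex_of_real r * \<phi> x" using sm[of "complex_of_real r" x] sc_real by simp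
  show "\<phi> (x ^ n) = \<phi> x ^ n" by (induction n) (simp_all add: one mul)
  have z0: "\<phi> 0 = 0" using add[of 0 0] by simp
  show "\<phi> (sum f A) = (\<Sum>i\<in>A. \<phi> (f i))" by (induction A rule: infinite_finite_induct) (simp_all add: z0 add)
  show "\<phi> (x - y) = \<phi> x - \<phi> y" using add[of "x - y" y] by (simp add: algebra_simps)
qed

definition addline :: "'b::real_normed_vector set \<Rightarrow> 'b \<Rightarrow> 'b set" where
  "addline S v = {s + a *\<^sub>R v | s a. s \<in> S}"

lemma infdist_approx:
  assumes "S \<noteq> {}" "infdist v S < e"
  shows "\<exists>z\<in>S. dist v z < e"
proof -
  have "Inf ((\<lambda>a. dist v a) ` S) < e" using assms by (simp add: infdist_def)
  from cInf_lessD[OF _ this] assms(1) show ?thesis by blast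
qed

lemma line_bound:
  fixes S :: "'b::real_normed_vector set"
  assumes S: "subspace S" and s: "s \<in> S"
  shows "\<bar>a\<bar> * infdist v S \<le> norm (s + a *\<^sub>R v)"
proof (cases "a = 0")
  case True then show ?thesis by simp
next
  case False
  have m: "- (1/a) *\<^sub>R s \<in> S" using S s by (simp add: subspace_neg subspace_scale)
  have "infdist v S \<le> dist v (- (1/a) *\<^sub>R s)" by (rule infdist_le[OF m])
  also have "\<dots> = norm (v + (1/a) *\<^sub>R s)" by (simp add: dist_norm)
  finally have "\<bar>a\<bar> * infdist v S \<le> \<bar>a\<bar> * norm (v + (1/a) *\<^sub>R s)" by (simp add: mult_left_mono)
  also have "\<bar>a\<bar> * norm (v + (1/a) *\<^sub>R s) = norm (a *\<^sub>R (v + (1/a) *\<^sub>R s))" by simp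
  also have "a *\<^sub>R (v + (1/a) *\<^sub>R s) = s + a *\<^sub>R v" using False by (simp add: algebra_simps)
  finally show ?thesis .
qed

lemma addline_subspace:
  assumes S: "subspace S"
  shows "subspace (addline S v)"
  unfolding subspace_def
proof (intro conjI ballI allI)
  show "0 \<in> addline S v" unfolding addline_def
  proof -
    have "(0::'a) = 0 + 0 *\<^sub>R v" by simp
    with subspace_0[OF S] show "0 \<in> {s + a *\<^sub>R v | s a. s \<in> S}" by blast
  qed
next
  fix x y assume "x \<in> addline S v" "y \<in> addline S v"
  then obtain s1 a1 s2 a2 where h: "x = s1 + a1 *\<^sub>R v" "s1 \<in> S" "y = s2 + a2 *\<^sub>R v" "s2 \<in> S"
    unfolding addline_def by blast
  then have "x + y = (s1 + s2) + (a1 + a2) *\<^sub>R v" by (simp add: algebra_simps)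
  with subspace_add[OF S h(2) h(4)] show "x + y \<in> addline S v" unfolding addline_def by blast
next
  fix c x assume "x \<in> addline S v"
  then obtain s1 a1 where h: "x = s1 + a1 *\<^sub>R v" "s1 \<in> S" unfolding addline_def by blast
  then have "c *\<^sub>R x = (c *\<^sub>R s1) + (c * a1) *\<^sub>R v" by (simp add: algebra_simps)
  with subspace_scale[OF S h(2)] show "c *\<^sub>R x \<in> addline S v" unfolding addline_def by blast
qed

lemma addline_in: "subspace S \<Longrightarrow> v \<in> S \<Longrightarrow> addline S v = S"
proof
  assume S: "subspace S" and v: "v \<in> S"
  show "addline S v \<subseteq> S" unfolding addline_def
    using S v by (auto intro: subspace_add subspace_scale)
  show "S \<subseteq> addline S v"
  proof
    fix s assume "s \<in> S"
    moreover have "s = s + 0 *\<^sub>R v" by simp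
    ultimately show "s \<in> addline S v" unfolding addline_def by blast
  qed
qed

lemma addline_closed:
  fixes S :: "'b::real_normed_vector set"
  assumes S: "subspace S" "closed S"
  shows "closed (addline S v)"
proof (cases "v \<in> S")
  case True then show ?thesis using addline_in[OF S(1) True] S by simp
next
  case False
  have Sne: "S \<noteq> {}" using subspace_0[OF S(1)] by blast
  define d where "d = infdist v S"
  have d: "0 < d" unfolding d_def by (rule infdist_pos_not_in_closed[OF S(2) Sne False])
  show ?thesis unfolding closed_sequential_limits
  proof (intro allI impI, elim conjE)
    fix y l assume yin: "\<forall>n. y n \<in> addline S v" and lim: "y \<longlonglongrightarrow> l"
    have "\<forall>n. \<exists>p. fst p \<in> S \<and> y n = fst p + snd p *\<^sub>R v"
    proof
      fix n
      from yin obtain s a where "s \<in> S" "y n = s + a *\<^sub>R v" unfolding addline_def by blast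
      then show "\<exists>p. fst p \<in> S \<and> y n = fst p + snd p *\<^sub>R v" by (intro exI[of _ "(s, a)"]) simp
    qed
    then obtain p where p: "\<And>n. fst (p n) \<in> S" "\<And>n. y n = fst (p n) + snd (p n) *\<^sub>R v"
      using choice[of "\<lambda>n p. fst p \<in> S \<and> y n = fst p + snd p *\<^sub>R v"] by blast
    define s where "s n = fst (p n)" for n
    define a where "a n = snd (p n)" for n
    have sS: "s n \<in> S" for n using p(1) by (simp add: s_def)
    have ya: "y n = s n + a n *\<^sub>R v" for n using p(2) by (simp add: s_def a_def)
    have bnd: "\<bar>a m - a n\<bar> * d \<le> dist (y m) (y n)" for m n
    proof -
      have "y m - y n = (s m - s n) + (a m - a n) *\<^sub>R v" by (simp add: ya algebra_simps)
      moreover have "s m - s n \<in> S" by (rule subspace_diff[OF S(1) sS sS])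
      ultimately show ?thesis using line_bound[OF S(1), of "s m - s n" "a m - a n" v]
        by (simp add: dist_norm d_def)
    qed
    have "Cauchy y" using lim by (rule LIMSEQ_imp_Cauchy)
    have "Cauchy a"
    proof (rule metric_CauchyI)
      fix e :: real assume e: "0 < e"
      obtain K where K: "\<forall>m\<ge>K. \<forall>n\<ge>K. dist (y m) (y n) < e * d"
        using metric_CauchyD[OF \<open>Cauchy y\<close>, of "e * d"] e d by auto
      have "\<forall>m\<ge>K. \<forall>n\<ge>K. dist (a m) (a n) < e"
      proof (intro allI impI)
        fix m n assume "m \<ge> K" "n \<ge> K"
        then have "\<bar>a m - a n\<bar> * d < e * d" using K bnd[of m n] by fastforce
        then show "dist (a m) (a n) < e" using d by (simp add: dist_real_def)
      qed
      then show "\<exists>K. \<forall>m\<ge>K. \<forall>n\<ge>K. dist (a m) (a n) < e" by blast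
    qed
    then obtain A where A: "a \<longlonglongrightarrow> A" using Cauchy_convergent_iff convergent_def by blast
    have "(\<lambda>n. y n - a n *\<^sub>R v) \<longlonglongrightarrow> l - A *\<^sub>R v"
      by (intro tendsto_intros lim A)
    moreover have "(\<lambda>n. y n - a n *\<^sub>R v) = s" by (simp add: ya fun_eq_iff)
    ultimately have "s \<longlonglongrightarrow> l - A *\<^sub>R v" by simp
    then have "l - A *\<^sub>R v \<in> S" using closed_sequentially[OF S(2)] sS by blast
    moreover have "l = (l - A *\<^sub>R v) + A *\<^sub>R v" by simp
    ultimately show "l \<in> addline S v" unfolding addline_def by blast
  qed
qed

lemma riesz_lemma:
  fixes S :: "'b::real_normed_vector set"
  assumes S: "subspace S" "closed S" and v: "v \<notin> S"
  shows "\<exists>x\<in>addline S v. norm x = 1/2 \<and> (\<forall>w\<in>S. 1/4 \<le> norm (x - w))"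
proof -
  have Sne: "S \<noteq> {}" using subspace_0[OF S(1)] by blast
  define d where "d = infdist v S"
  have d: "0 < d" unfolding d_def by (rule infdist_pos_not_in_closed[OF S(2) Sne v])
  have "infdist v S < 2 * d" using d by (simp add: d_def)
  then obtain z where z: "z \<in> S" "dist v z < 2 * d" using infdist_approx[OF Sne] by blast
  define \<rho> where "\<rho> = norm (v - z)"
  have dr: "d \<le> \<rho>" unfolding \<rho>_def d_def using infdist_le[OF z(1), of v] by (simp add: dist_norm)
  have rp: "0 < \<rho>" using d dr by simp
  have r2: "\<rho> < 2 * d" using z(2) by (simp add: \<rho>_def dist_norm)
  define x where "x = (1 / (2 * \<rho>)) *\<^sub>R (v - z)"
  have xin: "x \<in> addline S v"
  proof -
    have "x = (- (1 / (2 * \<rho>)) *\<^sub>R z) + (1 / (2 * \<rho>)) *\<^sub>R v" by (simp add: x_def algebra_simps)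
    moreover have "- (1 / (2 * \<rho>)) *\<^sub>R z \<in> S" using S(1) z(1) by (simp add: subspace_neg subspace_scale)
    ultimately show ?thesis unfolding addline_def by blast
  qed
  have nx: "norm x = 1/2" using rp by (simp add: x_def \<rho>_def)
  have "1/4 \<le> norm (x - w)" if w: "w \<in> S" for w
  proof -
    have zw: "z + (2 * \<rho>) *\<^sub>R w \<in> S" using S(1) z(1) w by (simp add: subspace_add subspace_scale)
    have "x - w = (1 / (2 * \<rho>)) *\<^sub>R (v - (z + (2 * \<rho>) *\<^sub>R w))"
      using rp by (simp add: x_def algebra_simps)
    then have "norm (x - w) = (1 / (2 * \<rho>)) * norm (v - (z + (2 * \<rho>) *\<^sub>R w))" using rp by simp
    also have "norm (v - (z + (2 * \<rho>) *\<^sub>R w)) \<ge> d"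
      unfolding d_def using infdist_le[OF zw, of v] by (simp add: dist_norm)
    then have "(1 / (2 * \<rho>)) * norm (v - (z + (2 * \<rho>) *\<^sub>R w)) \<ge> (1 / (2 * \<rho>)) * d"
      using rp by (intro mult_left_mono) auto
    finally have "(1 / (2 * \<rho>)) * d \<le> norm (x - w)" .
    moreover have "1/4 \<le> (1 / (2 * \<rho>)) * d" using r2 rp by (simp add: field_simps)
    ultimately show ?thesis by linarith
  qed
  with xin nx show ?thesis by blast
qed

fun Psp :: "(nat \<Rightarrow> 'b::real_normed_vector) \<Rightarrow> nat \<Rightarrow> 'b set" where
  "Psp g 0 = addline {0} (g 0)"
| "Psp g (Suc n) = addline (Psp g n) (g (Suc n))"

lemma Psp_sc: "subspace (Psp g n) \<and> closed (Psp g n)"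
proof (induction n)
  case 0
  have "subspace {0::'a}" by (simp add: subspace_def)
  then show ?case by (simp add: addline_subspace addline_closed)
next
  case (Suc n)
  then show ?case by (simp add: addline_subspace addline_closed)
qed

lemma addline_sub: "subspace S \<Longrightarrow> S \<subseteq> addline S v"
proof
  fix s assume "s \<in> S"
  moreover have "s = s + 0 *\<^sub>R v" by simp
  ultimately show "s \<in> addline S v" unfolding addline_def by blast
qed

lemma addline_v: "subspace S \<Longrightarrow> v \<in> addline S v"
proof -
  assume "subspace S"
  then have "0 \<in> S" by (rule subspace_0)
  moreover have "v = 0 + 1 *\<^sub>R v" by simp
  ultimately show "v \<in> addline S v" unfolding addline_def by blast
qed

lemma Psp_mono: "m \<le> n \<Longrightarrow> Psp g m \<subseteq> Psp g n"
proof -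
  assume "m \<le> n"
  have "\<And>k. Psp g k \<subseteq> Psp g (Suc k)"
  proof -
    fix k show "Psp g k \<subseteq> Psp g (Suc k)" using addline_sub[of "Psp g k" "g (Suc k)"] Psp_sc[of g k] by simp
  qed
  then show ?thesis by (rule lift_Suc_mono_le) fact
qed

lemma Psp_E: "subspace E \<Longrightarrow> (\<And>i. g i \<in> E) \<Longrightarrow> Psp g n \<subseteq> E"
proof (induction n)
  case 0
  show ?case unfolding Psp.simps addline_def using 0 by (auto intro: subspace_scale)
next
  case (Suc n)
  then show ?case unfolding Psp.simps addline_def by (auto intro: subspace_scale subspace_add)
qed

lemma Psp_repr: "y \<in> Psp g n \<Longrightarrow> \<exists>c. y = (\<Sum>i\<le>n. c i *\<^sub>R g i)"
proof (induction n arbitrary: y)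
  case 0
  then obtain a where "y = a *\<^sub>R g 0" unfolding Psp.simps addline_def by auto
  then show ?case by (intro exI[of _ "\<lambda>_. a"]) simp
next
  case (Suc n)
  then obtain s a where sa: "y = s + a *\<^sub>R g (Suc n)" "s \<in> Psp g n" unfolding Psp.simps addline_def by auto
  then obtain c where c: "s = (\<Sum>i\<le>n. c i *\<^sub>R g i)" using Suc.IH by blast
  define c' where "c' = c(Suc n := a)"
  have "(\<Sum>i\<le>Suc n. c' i *\<^sub>R g i) = (\<Sum>i\<le>n. c' i *\<^sub>R g i) + a *\<^sub>R g (Suc n)"
    by (simp add: c'_def)
  also have "(\<Sum>i\<le>n. c' i *\<^sub>R g i) = (\<Sum>i\<le>n. c i *\<^sub>R g i)"
    by (rule sum.cong) (auto simp: c'_def)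
  finally show ?case using sa c by metis
qed

lemma riesz_seq:
  fixes g :: "nat \<Rightarrow> 'b::real_normed_vector"
  assumes E: "subspace E" and gE: "\<And>i. g i \<in> E" and C: "compact C"
    and approx: "\<And>x. x \<in> E \<Longrightarrow> norm x < 1 \<Longrightarrow> \<exists>z\<in>C. norm (x - z) < 1/16"
  shows "\<exists>N. g (Suc N) \<in> Psp g N"
proof (rule ccontr)
  assume "\<not> (\<exists>N. g (Suc N) \<in> Psp g N)"
  then have nin: "\<And>N. g (Suc N) \<notin> Psp g N" by blast
  have "\<forall>N. \<exists>x. x \<in> Psp g (Suc N) \<and> norm x = 1/2 \<and> (\<forall>w\<in>Psp g N. 1/4 \<le> norm (x - w))"
  proof
    fix N
    from riesz_lemma[of "Psp g N" "g (Suc N)"] Psp_sc[of g N] nin[of N]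
    show "\<exists>x. x \<in> Psp g (Suc N) \<and> norm x = 1/2 \<and> (\<forall>w\<in>Psp g N. 1/4 \<le> norm (x - w))" by auto
  qed
  then obtain x where x: "\<And>N. x N \<in> Psp g (Suc N)" "\<And>N. norm (x N) = 1/2"
    "\<And>N w. w \<in> Psp g N \<Longrightarrow> 1/4 \<le> norm (x N - w)"
    using choice[of "\<lambda>N x. x \<in> Psp g (Suc N) \<and> norm x = 1/2 \<and> (\<forall>w\<in>Psp g N. 1/4 \<le> norm (x - w))"] by blast
  have xE: "x N \<in> E" for N
  proof -
    have "Psp g (Suc N) \<subseteq> E" using Psp_E[of E g "Suc N"] E gE by blast
    then show ?thesis using x(1)[of N] by blast
  qed
  have "\<forall>N. \<exists>z. z \<in> C \<and> norm (x N - z) < 1/16"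
  proof
    fix N
    have "norm (x N) < 1" using x(2)[of N] by simp
    then show "\<exists>z. z \<in> C \<and> norm (x N - z) < 1/16" using approx[OF xE[of N]] by blast
  qed
  then obtain z where z: "\<And>N. z N \<in> C" "\<And>N. norm (x N - z N) < 1/16"
    using choice[of "\<lambda>N z. z \<in> C \<and> norm (x N - z) < 1/16"] by blast
  have sep: "1/8 \<le> dist (z m) (z n)" if mn: "m < n" for m n
  proof -
    have "x m \<in> Psp g n" using x(1)[of m] Psp_mono[of "Suc m" n g] mn by auto
    then have a: "1/4 \<le> norm (x n - x m)" by (rule x(3))
    have eq: "x n - x m = (x n - z n) - (x m - z m) + (z n - z m)" by (simp add: algebra_simps)
    have t1: "norm (x n - x m) \<le> norm ((x n - z n) - (x m - z m)) + norm (z n - z m)"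
      unfolding eq by (rule norm_triangle_ineq)
    have t2: "norm ((x n - z n) - (x m - z m)) \<le> norm (x n - z n) + norm (x m - z m)"
      by (rule norm_triangle_ineq4)
    have "norm (x n - x m) \<le> norm (x n - z n) + norm (x m - z m) + norm (z n - z m)"
      using t1 t2 by linarith
    then show ?thesis using a z(2)[of n] z(2)[of m] by (simp add: dist_norm norm_minus_commute)
  qed
  have "seq_compact C" by (rule compact_imp_seq_compact[OF C])
  then have "\<exists>l\<in>C. \<exists>r::nat\<Rightarrow>nat. strict_mono r \<and> (z \<circ> r) \<longlonglongrightarrow> l"
    unfolding seq_compact_def using z(1) by blast
  then obtain l r where lr: "l \<in> C" "strict_mono r" "(z \<circ> r) \<longlonglongrightarrow> l" by blast
  have "Cauchy (z \<circ> r)" using lr(3) by (rule LIMSEQ_imp_Cauchy)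
  then obtain K where K: "\<forall>m\<ge>K. \<forall>n\<ge>K. dist ((z \<circ> r) m) ((z \<circ> r) n) < 1/8"
    using metric_CauchyD[of "z \<circ> r" "1/8"] by auto
  have "dist (z (r K)) (z (r (Suc K))) < 1/8" using K by simp
  moreover have "r K < r (Suc K)" using lr(2) by (simp add: strict_mono_def)
  ultimately show False using sep[of "r K" "r (Suc K)"] by simp
qed

lemma bop_bl:
  fixes sc :: "complex \<Rightarrow> 'a::{real_normed_algebra,comm_ring_1,banach} \<Rightarrow> 'a"
  assumes cs: "complex_scaling sc" and b: "bounded_op sc K"
  shows "bounded_linear K"
proof -
  interpret cba sc by (rule cba.intro[OF cs])
  have add: "\<And>x y. K (x + y) = K x + K y" and sm: "\<And>c x. K (sc c x) = sc c (K x)"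
    and bd: "\<exists>M. \<forall>x. norm (K x) \<le> norm x * M"
    using b unfolding bounded_op_def clinear_map_def by blast+
  obtain Mb where Mb: "\<And>x. norm (K x) \<le> norm x * Mb" using bd by blast
  show ?thesis
  proof (rule bounded_linear_intro[of K, OF add _ Mb])
    fix r x show "K (r *\<^sub>R x) = r *\<^sub>R K x" using sm[of "complex_of_real r" x] by (simp add: sc_real)
  qed
qed

lemma zero_compact:
  fixes sc :: "complex \<Rightarrow> 'a::{real_normed_algebra,comm_ring_1,banach} \<Rightarrow> 'a"
  assumes cs: "complex_scaling sc"
  shows "compact_op sc (\<lambda>x. 0)"
proof -
  interpret cba sc by (rule cba.intro[OF cs])
  have "sc c 0 = 0" for c by (simp add: sc_emb)
  moreover have "\<exists>M. \<forall>x::'a. norm (0::'a) \<le> norm x * M" by (rule exI[of _ 0]) simp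
  ultimately have "bounded_op sc (\<lambda>x. 0)" unfolding bounded_op_def clinear_map_def by simp
  moreover have "(\<lambda>x::'a. 0::'a) ` ball 0 1 = {0}" by (rule image_constant[of 0]) simp
  ultimately show ?thesis unfolding compact_op_def by simp
qed

lemma small_op:
  fixes sc :: "complex \<Rightarrow> 'a::{real_normed_algebra,comm_ring_1,banach} \<Rightarrow> 'a"
  assumes cs: "complex_scaling sc" and ri: "riesz_op sc T"
  shows "\<exists>n K. compact_op sc K \<and> onorm (\<lambda>x. (T ^^ n) x - K x) < 1/16"
proof -
  define S where "S n = {onorm (\<lambda>x. (T ^^ n) x - K x) | K. compact_op sc K}" for n
  have lim: "(\<lambda>n. Inf (S n) powr (1 / real n)) \<longlonglongrightarrow> 0"
    using ri unfolding riesz_op_def S_def by blast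
  have "\<forall>\<^sub>F n in sequentially. Inf (S n) powr (1 / real n) < 1/16"
    by (rule order_tendstoD(2)[OF lim]) simp
  then obtain N0 where N0: "\<And>n. n \<ge> N0 \<Longrightarrow> Inf (S n) powr (1 / real n) < 1/16"
    unfolding eventually_sequentially by blast
  define n where "n = Suc N0"
  have lt: "Inf (S n) powr (1 / real n) < 1/16" using N0[of n] by (simp add: n_def)
  have Sne: "S n \<noteq> {}" using zero_compact[OF cs] unfolding S_def by blast
  have "Inf (S n) < 1/16"
  proof (rule ccontr)
    assume "\<not> Inf (S n) < 1/16"
    then have ge: "1/16 \<le> Inf (S n)" by simp
    have e: "0 \<le> 1 / real n" "1 / real n \<le> 1" by (simp_all add: n_def)
    have "(1/16::real) = (1/16) powr 1" by simp
    also have "\<dots> \<le> (1/16) powr (1 / real n)" by (rule powr_mono'[OF e(2)]) simp_all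
    also have "\<dots> \<le> Inf (S n) powr (1 / real n)" by (rule powr_mono2[OF e(1) _ ge]) simp
    finally show False using lt by simp
  qed
  from cInf_lessD[OF Sne this] obtain K where "compact_op sc K" "onorm (\<lambda>x. (T ^^ n) x - K x) < 1/16"
    unfolding S_def by blast
  then show ?thesis by blast
qed

lemma funpow_bl:
  fixes T :: "'a::real_normed_vector \<Rightarrow> 'a"
  shows "bounded_linear T \<Longrightarrow> bounded_linear (T ^^ n)"
proof (induction n)
  case 0
  have e: "T ^^ 0 = (\<lambda>x. x)" by (rule ext) simp
  show ?case unfolding e by (rule bounded_linear_ident)
next
  case (Suc n)
  have "bounded_linear (\<lambda>x. T ((T ^^ n) x))" by (rule bounded_linear_compose[OF Suc.prems Suc.IH[OF Suc.prems]])
  then show ?case by (simp add: comp_def)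
qed

lemma funpow_fix: "T f = f \<Longrightarrow> (T ^^ n) f = f"
  by (induction n) simp_all

lemma fin_dep:
  fixes sc :: "complex \<Rightarrow> 'a::{real_normed_algebra,comm_ring_1,banach} \<Rightarrow> 'a"
  assumes cs: "complex_scaling sc" and ue: "unital_endomorphism sc T" and ri: "riesz_op sc T"
    and f: "T f = f"
  shows "\<exists>N c. f ^ Suc N = (\<Sum>i\<le>N. c i *\<^sub>R f ^ i)"
proof -
  interpret cba sc by (rule cba.intro[OF cs])
  have Tb: "bounded_op sc T" using ri unfolding riesz_op_def by blast
  have Tbl: "bounded_linear T" by (rule bop_bl[OF cs Tb])
  have Tmul: "\<And>x y. T (x * y) = T x * T y" and T1: "T 1 = 1"
    using ue unfolding unital_endomorphism_def by blast+
  obtain n K where K: "compact_op sc K" "onorm (\<lambda>x. (T ^^ n) x - K x) < 1/16" using small_op[OF cs ri] by blast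
  have Kbl: "bounded_linear K" using K(1) bop_bl[OF cs] unfolding compact_op_def by blast
  have Dbl: "bounded_linear (\<lambda>x. (T ^^ n) x - K x)" by (rule bounded_linear_sub[OF funpow_bl[OF Tbl] Kbl])
  define E where "E = {x. T x = x}"
  have Esub: "subspace E" unfolding subspace_def E_def
    using linear_0[OF bounded_linear.linear[OF Tbl]] linear_add[OF bounded_linear.linear[OF Tbl]]
      linear_scale[OF bounded_linear.linear[OF Tbl]] by simp
  define C where "C = closure (K ` ball 0 1)"
  have C: "compact C" using K(1) unfolding compact_op_def C_def by blast
  have approx: "\<exists>z\<in>C. norm (x - z) < 1/16" if x: "x \<in> E" "norm x < 1" for x
  proof -
    have "K x \<in> C" unfolding C_def using x(2) closure_subset by fastforce
    moreover have "norm (x - K x) < 1/16"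
    proof -
      have "(T ^^ n) x = x" using x(1) funpow_fix[of T x n] by (simp add: E_def)
      then have "norm (x - K x) = norm ((T ^^ n) x - K x)" by simp
      also have "\<dots> \<le> onorm (\<lambda>x. (T ^^ n) x - K x) * norm x" by (rule onorm[OF Dbl])
      also have "\<dots> \<le> onorm (\<lambda>x. (T ^^ n) x - K x) * 1"
        using x(2) onorm_pos_le[OF Dbl] by (intro mult_left_mono) auto
      also have "\<dots> < 1/16" using K(2) by simp
      finally show ?thesis .
    qed
    ultimately show ?thesis by blast
  qed
  have gE: "f ^ i \<in> E" for i
  proof -
    have "T (f ^ i) = f ^ i" by (induction i) (simp_all add: T1 Tmul f)
    then show ?thesis by (simp add: E_def)
  qed
  obtain N where "f ^ Suc N \<in> Psp (\<lambda>i. f ^ i) N"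
    using riesz_seq[of E "\<lambda>i. f ^ i" C, OF Esub gE C approx] by blast
  then obtain c where "f ^ Suc N = (\<Sum>i\<le>N. c i *\<^sub>R f ^ i)" using Psp_repr by blast
  then show ?thesis by blast
qed

lemma char_ker_ideal:
  fixes sc :: "complex \<Rightarrow> 'a::{real_normed_algebra,comm_ring_1,banach} \<Rightarrow> 'a"
  assumes cs: "complex_scaling sc" and ph: "\<phi> \<in> characters sc"
  shows "ring_ideal {y. \<phi> y = 0}" "1 \<notin> {y. \<phi> y = 0}"
proof -
  note P = char_props[OF cs ph]
  have z: "\<phi> 0 = 0" using P(8)[of 0 0] by simp
  have n: "\<phi> (- x) = - \<phi> x" for x using P(8)[of 0 x] z by simp
  show "ring_ideal {y. \<phi> y = 0}" unfolding ring_ideal_def using z n P(2) P(3) by simp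
  show "1 \<notin> {y. \<phi> y = 0}" using P(1) by simp
qed

theorem theorem2p1:
  fixes sc :: "complex \<Rightarrow> 'a::{real_normed_algebra,comm_ring_1,banach} \<Rightarrow> 'a"
    and T :: "'a \<Rightarrow> 'a"
  assumes "complex_scaling sc"
    and "semisimple TYPE('a)"
    and "connected (characters sc)"
    and "unital_endomorphism sc T"
    and "riesz_op sc T"
  shows "{f. T f = f} = range (\<lambda>c. sc c 1)"
proof -
  note cs = assms(1)
  have Tsc: "\<And>c x. T (sc c x) = sc c (T x)" and T1: "T 1 = 1"
    using assms(4) unfolding unital_endomorphism_def clinear_map_def by blast+
  show ?thesis
  proof
    show "range (\<lambda>c. sc c 1) \<subseteq> {f. T f = f}" using Tsc T1 by auto
  next
    show "{f. T f = f} \<subseteq> range (\<lambda>c. sc c 1)"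
    proof
      fix f assume "f \<in> {f. T f = f}"
      then have f: "T f = f" by simp
      obtain N c where Nc: "f ^ Suc N = (\<Sum>i\<le>N. c i *\<^sub>R f ^ i)"
        using fin_dep[OF cs assms(4) assms(5) f] by blast
      define a where "a i = (if i = Suc N then 1 else - complex_of_real (c i))" for i
      define Z where "Z = {z. (\<Sum>i\<le>Suc N. a i * z ^ i) = 0}"
      have ex: "\<exists>k\<le>Suc N. a k \<noteq> 0" by (rule exI[of _ "Suc N"]) (simp add: a_def)
      have Zfin: "finite Z" unfolding Z_def using polyfun_rootbound[of "Suc N" a, OF ex] by blast
      define X where "X = characters sc"
      have inZ: "\<phi> f \<in> Z" if ph: "\<phi> \<in> X" for \<phi>
      proof -
        note P = char_props[OF cs ph[unfolded X_def]]
        have "\<phi> f ^ Suc N = \<phi> (f ^ Suc N)" by (rule P(6)[symmetric])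
        also have "\<dots> = (\<Sum>i\<le>N. complex_of_real (c i) * \<phi> f ^ i)" unfolding Nc P(7) P(5) P(6) by (rule refl)
        finally have e1: "\<phi> f ^ Suc N - (\<Sum>i\<le>N. complex_of_real (c i) * \<phi> f ^ i) = 0" by simp
        have "(\<Sum>i\<le>Suc N. a i * \<phi> f ^ i) = (\<Sum>i\<le>N. a i * \<phi> f ^ i) + \<phi> f ^ Suc N"
          by (simp add: a_def)
        also have "(\<Sum>i\<le>N. a i * \<phi> f ^ i) = - (\<Sum>i\<le>N. complex_of_real (c i) * \<phi> f ^ i)"
          by (simp add: a_def sum_negf[symmetric])
        finally have "(\<Sum>i\<le>Suc N. a i * \<phi> f ^ i) = 0" using e1 by simp
        then show ?thesis unfolding Z_def by simp
      qed
      have cont: "continuous_on X (\<lambda>\<phi>. \<phi> f)"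
        by (rule continuous_on_subset[OF continuous_on_product_coordinates]) simp
      have "(\<lambda>\<phi>. \<phi> f) ` X \<subseteq> Z" using inZ by blast
      then have "finite ((\<lambda>\<phi>. \<phi> f) ` X)" using Zfin by (rule finite_subset)
      then have "(\<lambda>\<phi>. \<phi> f) constant_on X"
        using continuous_finite_range_constant[OF assms(3)[folded X_def] cont] by blast
      then obtain l where l: "\<And>\<phi>. \<phi> \<in> X \<Longrightarrow> \<phi> f = l" unfolding constant_on_def by blast
      have "f - sc l 1 \<in> \<Inter> {I :: 'a set. maximal_ideal I}"
      proof
        fix I :: "'a set" assume "I \<in> {I. maximal_ideal I}"
        then have I: "maximal_ideal I" by simp
        obtain \<phi> where ph: "\<phi> \<in> characters sc" "\<forall>y\<in>I. \<phi> y = 0" using char_exists[OF cs I] by blast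
        define J where "J = {y. \<phi> y = 0}"
        have J: "ring_ideal J" "1 \<notin> J" using char_ker_ideal[OF cs ph(1)] by (simp_all add: J_def)
        have IJ: "I \<subseteq> J" using ph(2) by (auto simp: J_def)
        have "J \<noteq> UNIV" using J(2) by blast
        then have JI: "J = I" using I J(1) IJ unfolding maximal_ideal_def by blast
        note P = char_props[OF cs ph(1)]
        have e1: "\<phi> (f - sc l 1) = \<phi> f - l * \<phi> 1" using P(8) P(4) by simp
        have "\<phi> f = l" using l ph(1) by (simp add: X_def)
        then have "\<phi> f - l * \<phi> 1 = 0" using P(1) by simp
        then have "\<phi> (f - sc l 1) = 0" using e1 by simp
        then have "f - sc l 1 \<in> J" by (simp add: J_def)
        then show "f - sc l 1 \<in> I" using JI by simp
      qed
      then have "f - sc l 1 = 0" using assms(2) unfolding semisimple_def by blast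
      then have "f = sc l 1" by simp
      then show "f \<in> range (\<lambda>c. sc c 1)" by blast
    qed
  qed
qed

end
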